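(* There exists a unique $h\in\Delta_f$ such that $Ph=\lambda h$. Moreover $h$ is strictly positive on $\Omega$.
   Context: Let $I=[0,1)$ carry a metric $d_I$, fix $\theta\in(0,1)$, and let $\Omega=I^{\mathbb Z}$ with metric $d(x,y)=\sup_{k\in\mathbb Z}\theta^{|k|}d_I(x_k,y_k)$. Let $\tau:I\to I$ have full branches, so that $b=\#\tau^{-1}(t)$ is constant; let $p_\tau$ be a fixed point of $\tau$. Assume there is $\eta\in(0,1)$ such that every inverse branch $\zeta$ of $\tau$ satisfies $d_I(\zeta(s),\zeta(t))\le\eta\,d_I(s,t)$. Let $(\bar\tau x)_i=\tau(x_i)$. Let $\pi_k:\Omega\to\Omega$ keep the coordinates $|i|\le k$ and set the others to $p_\tau$; $\Phi_k=\Phi\circ\pi_k$. Fix $\beta\in(0,1]$; $|\Phi|_\infty=\sup|\Phi|$, $|\Phi|_\beta=\sup_{k\in\mathbb N}\sup_{x\neq y}|\Phi_k(x)-\Phi_k(y)|/d(x,y)^\beta$, $\|\Phi\|=|\Phi|_\infty+|\Phi|_\beta$, $\mathcal C=\{\Phi\in C(\Omega):\|\Phi\|<\infty\}$. An inverse branch of order $k$ is a choice $\zeta=(\zeta_j)_{|j|\le k}$ of inverse branches of $\tau$, with $(\zeta_x)_j=\zeta_j(x_j)$ for $|j|\le k$, $(\zeta_x)_j=x_j$ otherwise; $b_k=b^{2k+1}$. For real $f\in\mathcal C$, $P_k\Phi(x)=b_k^{-1}\sum_{|\zeta|=k}e^{f(\pi_k\zeta_x)}\Phi(\pi_k\zeta_x)$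 and $P\Phi=\lim_kP_k\Phi$ pointwise. Fix a Borel probability measure $\nu_0$ on $\Omega$ with $P^*\nu_0=\lambda\nu_0$, where $\lambda=\int P\mathbf 1\,d\nu_0$ (such exists). Put $B(z)=\exp\!\left(|f|_\beta\frac{\eta^\beta}{1-\eta^\beta}z^\beta\right)$ for $z\ge0$ and $\Delta_f=\{\Phi\in C(\Omega):\Phi\ge0,\ \nu_0(\Phi)=1,\ \Phi(x)\le B(d(x,y))\Phi(y)\ \forall x,y\in\Omega\}$. *)

theory Defs
  imports "HOL-Probability.Probability"
begin

definition Icar :: "real set" where
  "Icar = {0..<1}"

definition Omega :: "(int \<Rightarrow> real) set" where
  "Omega = {x. \<forall>i. x i \<in> Icar}"

text \<open>d_I is a metric on I (given as a function on reals, only its values on I matter).\<close>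

definition is_metric_on :: "real set \<Rightarrow> (real \<Rightarrow> real \<Rightarrow> real) \<Rightarrow> bool" where
  "is_metric_on S dI \<longleftrightarrow>
     (\<forall>s\<in>S. \<forall>t\<in>S. 0 \<le> dI s t \<and> (dI s t = 0 \<longleftrightarrow> s = t) \<and> dI s t = dI t s) \<and>
     (\<forall>s\<in>S. \<forall>t\<in>S. \<forall>u\<in>S. dI s u \<le> dI s t + dI t u)"

definition dOm :: "(real \<Rightarrow> real \<Rightarrow> real) \<Rightarrow> real \<Rightarrow> (int \<Rightarrow> real) \<Rightarrow> (int \<Rightarrow> real) \<Rightarrow> real" where
  "dOm dI \<theta> x y = (SUP k. \<theta> ^ nat \<bar>k\<bar> * dI (x k) (y k))"

definition piK :: "real \<Rightarrow> nat \<Rightarrow> (int \<Rightarrow> real) \<Rightarrow> (int \<Rightarrow> real)" where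
  "piK p k x = (\<lambda>i. if \<bar>i\<bar> \<le> int k then x i else p)"

definition d_continuous :: "(real \<Rightarrow> real \<Rightarrow> real) \<Rightarrow> real \<Rightarrow> ((int \<Rightarrow> real) \<Rightarrow> real) \<Rightarrow> bool" where
  "d_continuous dI \<theta> \<Phi> \<longleftrightarrow>
     (\<forall>x\<in>Omega. \<forall>e>0. \<exists>\<delta>>0. \<forall>y\<in>Omega. dOm dI \<theta> x y < \<delta> \<longrightarrow> \<bar>\<Phi> y - \<Phi> x\<bar> < e)"

definition holder_quots ::
  "(real \<Rightarrow> real \<Rightarrow> real) \<Rightarrow> real \<Rightarrow> real \<Rightarrow> real \<Rightarrow> ((int \<Rightarrow> real) \<Rightarrow> real) \<Rightarrow> real set" where
  "holder_quots dI \<theta> p \<beta> \<Phi> =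
     {\<bar>\<Phi> (piK p k x) - \<Phi> (piK p k y)\<bar> / (dOm dI \<theta> x y) powr \<beta> | k x y.
        x \<in> Omega \<and> y \<in> Omega \<and> x \<noteq> y}"

definition holder_semi ::
  "(real \<Rightarrow> real \<Rightarrow> real) \<Rightarrow> real \<Rightarrow> real \<Rightarrow> real \<Rightarrow> ((int \<Rightarrow> real) \<Rightarrow> real) \<Rightarrow> real" where
  "holder_semi dI \<theta> p \<beta> \<Phi> = Sup (holder_quots dI \<theta> p \<beta> \<Phi>)"

definition in_C ::
  "(real \<Rightarrow> real \<Rightarrow> real) \<Rightarrow> real \<Rightarrow> real \<Rightarrow> real \<Rightarrow> ((int \<Rightarrow> real) \<Rightarrow> real) \<Rightarrow> bool" where
  "in_C dI \<theta> p \<beta> \<Phi> \<longleftrightarrow>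
     d_continuous dI \<theta> \<Phi> \<and> bdd_above {\<bar>\<Phi> x\<bar> | x. x \<in> Omega} \<and>
     bdd_above (holder_quots dI \<theta> p \<beta> \<Phi>)"

text \<open>Inverse branches of order k: choices (zeta_j)_{|j|<=k} of inverse branches from Z.\<close>

definition branches :: "(real \<Rightarrow> real) set \<Rightarrow> nat \<Rightarrow> (int \<Rightarrow> (real \<Rightarrow> real)) set" where
  "branches Z k = PiE {- int k .. int k} (\<lambda>_. Z)"

definition apply_branch :: "nat \<Rightarrow> (int \<Rightarrow> (real \<Rightarrow> real)) \<Rightarrow> (int \<Rightarrow> real) \<Rightarrow> (int \<Rightarrow> real)" where
  "apply_branch k \<zeta> x = (\<lambda>j. if \<bar>j\<bar> \<le> int k then \<zeta> j (x j) else x j)"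

definition Pk ::
  "(real \<Rightarrow> real) set \<Rightarrow> real \<Rightarrow> ((int \<Rightarrow> real) \<Rightarrow> real) \<Rightarrow> nat \<Rightarrow> ((int \<Rightarrow> real) \<Rightarrow> real)
     \<Rightarrow> (int \<Rightarrow> real) \<Rightarrow> real" where
  "Pk Z p f k \<Phi> x =
     (1 / real (card Z ^ (2 * k + 1))) *
     (\<Sum>\<zeta>\<in>branches Z k. exp (f (piK p k (apply_branch k \<zeta> x))) * \<Phi> (piK p k (apply_branch k \<zeta> x)))"

definition Ptr ::
  "(real \<Rightarrow> real) set \<Rightarrow> real \<Rightarrow> ((int \<Rightarrow> real) \<Rightarrow> real) \<Rightarrow> ((int \<Rightarrow> real) \<Rightarrow> real)
     \<Rightarrow> (int \<Rightarrow> real) \<Rightarrow> real" where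
  "Ptr Z p f \<Phi> x = lim (\<lambda>k. Pk Z p f k \<Phi> x)"

text \<open>Open subsets of Omega for the metric d (generating the Borel sigma-algebra).\<close>

definition d_open :: "(real \<Rightarrow> real \<Rightarrow> real) \<Rightarrow> real \<Rightarrow> (int \<Rightarrow> real) set \<Rightarrow> bool" where
  "d_open dI \<theta> U \<longleftrightarrow> U \<subseteq> Omega \<and>
     (\<forall>x\<in>U. \<exists>e>0. \<forall>y\<in>Omega. dOm dI \<theta> x y < e \<longrightarrow> y \<in> U)"

definition Bfun :: "real \<Rightarrow> real \<Rightarrow> real \<Rightarrow> real \<Rightarrow> real" where
  "Bfun fsemi \<eta> \<beta> z = exp (fsemi * (\<eta> powr \<beta> / (1 - \<eta> powr \<beta>)) * z powr \<beta>)"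

definition Delta_f ::
  "(real \<Rightarrow> real \<Rightarrow> real) \<Rightarrow> real \<Rightarrow> real \<Rightarrow> real \<Rightarrow> real \<Rightarrow> ((int \<Rightarrow> real) \<Rightarrow> real)
     \<Rightarrow> (int \<Rightarrow> real) measure \<Rightarrow> ((int \<Rightarrow> real) \<Rightarrow> real) set" where
  "Delta_f dI \<theta> p \<beta> \<eta> f \<nu> =
     {\<Phi>. d_continuous dI \<theta> \<Phi> \<and> (\<forall>x\<in>Omega. 0 \<le> \<Phi> x) \<and> integral\<^sup>L \<nu> \<Phi> = 1 \<and>
          (\<forall>x\<in>Omega. \<forall>y\<in>Omega.
             \<Phi> x \<le> Bfun (holder_semi dI \<theta> p \<beta> f) \<eta> \<beta> (dOm dI \<theta> x y) * \<Phi> y)}"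

end

theory Submission
  imports Defs
begin

locale rpf =
  fixes dI :: "real \<Rightarrow> real \<Rightarrow> real"
    and \<theta> \<eta> \<beta> lam p :: real
    and \<tau> :: "real \<Rightarrow> real"
    and Z :: "(real \<Rightarrow> real) set"
    and f :: "(int \<Rightarrow> real) \<Rightarrow> real"
    and \<nu>0 :: "(int \<Rightarrow> real) measure"
  assumes metric: "is_metric_on Icar dI"
    and dI_bdd: "\<exists>M. \<forall>s\<in>Icar. \<forall>t\<in>Icar. dI s t \<le> M"
    and theta: "0 < \<theta>" "\<theta> < 1"
    and beta: "0 < \<beta>" "\<beta> \<le> 1"
    and eta: "0 < \<eta>" "\<eta> < 1"
    and tau_maps: "\<forall>s\<in>Icar. \<tau> s \<in> Icar"
    and Z_fin: "finite Z"
    and Z_inv: "\<forall>\<zeta>\<in>Z. \<forall>t\<in>Icar. \<zeta> t \<in> Icar \<and> \<tau> (\<zeta> t) = t"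
    and Z_full: "\<forall>t\<in>Icar. {s\<in>Icar. \<tau> s = t} = (\<lambda>\<zeta>. \<zeta> t) ` Z
                   \<and> card {s\<in>Icar. \<tau> s = t} = card Z"
    and Z_contr: "\<forall>\<zeta>\<in>Z. \<forall>s\<in>Icar. \<forall>t\<in>Icar. dI (\<zeta> s) (\<zeta> t) \<le> \<eta> * dI s t"
    and p_fix: "p \<in> Icar" "\<tau> p = p"
    and f_C: "in_C dI \<theta> p \<beta> f"
    and nu_prob: "prob_space \<nu>0"
    and nu_space: "space \<nu>0 = Omega"
    and nu_sets: "sets \<nu>0 = sigma_sets Omega {U. d_open dI \<theta> U}"
    and lambda_def: "lam = integral\<^sup>L \<nu>0 (Ptr Z p f (\<lambda>_. 1))"
    and nu_eigen: "\<forall>\<Phi>. in_C dI \<theta> p \<beta> \<Phi> \<longrightarrow>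
                     integrable \<nu>0 (Ptr Z p f \<Phi>) \<and>
                     integral\<^sup>L \<nu>0 (Ptr Z p f \<Phi>) = lam * integral\<^sup>L \<nu>0 \<Phi>"
begin

lemma dI_props: "s \<in> Icar \<Longrightarrow> t \<in> Icar \<Longrightarrow> 0 \<le> dI s t \<and> (dI s t = 0 \<longleftrightarrow> s = t) \<and> dI s t = dI t s"
  using metric unfolding is_metric_on_def by blast

lemma dI_nonneg: "s \<in> Icar \<Longrightarrow> t \<in> Icar \<Longrightarrow> 0 \<le> dI s t"
  using dI_props by blast

lemma dI_self: "s \<in> Icar \<Longrightarrow> dI s s = 0"
  using dI_props by blast

lemma dI_sym: "s \<in> Icar \<Longrightarrow> t \<in> Icar \<Longrightarrow> dI s t = dI t s"
  using dI_props by blast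

definition Mb where "Mb = (SOME M. \<forall>s\<in>Icar. \<forall>t\<in>Icar. dI s t \<le> M)"

lemma Mb: "s \<in> Icar \<Longrightarrow> t \<in> Icar \<Longrightarrow> dI s t \<le> Mb"
  using someI_ex[OF dI_bdd] unfolding Mb_def by blast

lemma zero_Icar: "0 \<in> Icar" and half_Icar: "1/2 \<in> Icar"
  by (auto simp: Icar_def)

lemma Mb_nonneg: "0 \<le> Mb"
  using Mb[OF zero_Icar zero_Icar] dI_nonneg[OF zero_Icar zero_Icar] by linarith

lemma Omega_I: "x \<in> Omega \<Longrightarrow> x i \<in> Icar"
  by (simp add: Omega_def)

lemma const_Omega: "c \<in> Icar \<Longrightarrow> (\<lambda>_. c) \<in> Omega"
  by (simp add: Omega_def)

definition tm where "tm x y k = \<theta> ^ nat \<bar>k\<bar> * dI (x k) (y k)"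

definition dd where "dd x y = dOm dI \<theta> x y"

lemma dd_tm: "dd x y = (SUP k. tm x y k)"
  unfolding dd_def dOm_def tm_def by simp

lemma theta_pow: "0 < \<theta> ^ n" "\<theta> ^ n \<le> 1"
  using theta by (auto intro: power_le_one)

lemma tm_nonneg: "x \<in> Omega \<Longrightarrow> y \<in> Omega \<Longrightarrow> 0 \<le> tm x y k"
  unfolding tm_def using theta_pow[of "nat \<bar>k\<bar>"] dI_nonneg Omega_I by (simp)

lemma tm_le: "x \<in> Omega \<Longrightarrow> y \<in> Omega \<Longrightarrow> tm x y k \<le> Mb"
proof -
  assume x: "x \<in> Omega" and y: "y \<in> Omega"
  have "tm x y k \<le> 1 * dI (x k) (y k)" unfolding tm_def
    by (rule mult_right_mono) (use theta_pow dI_nonneg Omega_I x y in auto)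
  also have "\<dots> \<le> Mb" using Mb Omega_I x y by simp
  finally show ?thesis .
qed

lemma tm_bdd: "x \<in> Omega \<Longrightarrow> y \<in> Omega \<Longrightarrow> bdd_above (range (tm x y))"
  using tm_le by (auto intro!: bdd_aboveI)

lemma tm_le_dd: "x \<in> Omega \<Longrightarrow> y \<in> Omega \<Longrightarrow> tm x y k \<le> dd x y"
  unfolding dd_tm by (rule cSUP_upper) (auto intro: tm_bdd)

lemma dd_least: "(\<And>k. tm x y k \<le> c) \<Longrightarrow> dd x y \<le> c"
  unfolding dd_tm by (rule cSUP_least) auto

lemma dd_nonneg: "x \<in> Omega \<Longrightarrow> y \<in> Omega \<Longrightarrow> 0 \<le> dd x y"
  using tm_le_dd tm_nonneg by (meson order.trans)

lemma dd_le_M: "x \<in> Omega \<Longrightarrow> y \<in> Omega \<Longrightarrow> dd x y \<le> Mb"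
  by (rule dd_least) (rule tm_le)

lemma dd_sym: "x \<in> Omega \<Longrightarrow> y \<in> Omega \<Longrightarrow> dd x y = dd y x"
  unfolding dd_tm tm_def using dI_sym Omega_I by simp

lemma dd_pos: assumes "x \<in> Omega" "y \<in> Omega" "x \<noteq> y" shows "0 < dd x y"
proof -
  obtain i where i: "x i \<noteq> y i" using assms(3) by blast
  have "0 < dI (x i) (y i)" using dI_props[OF Omega_I[OF assms(1)] Omega_I[OF assms(2)]] i
    by (metis order_le_less)
  hence "0 < tm x y i" unfolding tm_def using theta_pow by simp
  thus ?thesis using tm_le_dd[OF assms(1,2)] by (meson less_le_trans)
qed

lemma dd_mono_tm: assumes "\<And>k. tm x y k \<le> c * tm x' y' k" "0 \<le> c" "x' \<in> Omega" "y' \<in> Omega"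
  shows "dd x y \<le> c * dd x' y'"
proof (rule dd_least)
  fix k
  have "tm x y k \<le> c * tm x' y' k" by (rule assms(1))
  also have "\<dots> \<le> c * dd x' y'" by (rule mult_left_mono[OF tm_le_dd[OF assms(3,4)] assms(2)])
  finally show "tm x y k \<le> c * dd x' y'" .
qed

definition T where "T = Mb powr \<beta>"

lemma T_nonneg: "0 \<le> T" unfolding T_def by simp

lemma ddb_le_T: "x \<in> Omega \<Longrightarrow> y \<in> Omega \<Longrightarrow> dd x y powr \<beta> \<le> T"
  unfolding T_def using dd_le_M dd_nonneg beta by (auto intro: powr_mono2)

lemma ddb_nonneg: "0 \<le> dd x y powr \<beta>" by simp

end

context rpf begin

definition w where "w k \<zeta> x = piK p k (apply_branch k \<zeta> x)"

lemma w_eq: "w k \<zeta> x = (\<lambda>i. if \<bar>i\<bar> \<le> int k then \<zeta> i (x i) else p)"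
  unfolding w_def piK_def apply_branch_def by auto

lemma br_mem: "\<zeta> \<in> branches Z k \<Longrightarrow> \<bar>i\<bar> \<le> int k \<Longrightarrow> \<zeta> i \<in> Z"
  unfolding branches_def by (auto simp: PiE_def Pi_def abs_le_iff)

lemma w_Omega: assumes "\<zeta> \<in> branches Z k" "x \<in> Omega" shows "w k \<zeta> x \<in> Omega"
  unfolding Omega_def w_eq using br_mem[OF assms(1)] Z_inv Omega_I[OF assms(2)] p_fix by auto

lemma piK_Omega: "x \<in> Omega \<Longrightarrow> piK p k x \<in> Omega"
  unfolding Omega_def piK_def using p_fix by auto

lemma piK_w: "k \<le> m \<Longrightarrow> piK p m (w k \<zeta> x) = w k \<zeta> x"
  unfolding w_eq piK_def by (auto simp: fun_eq_iff)

lemma dd_w_contract: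
  assumes "\<zeta> \<in> branches Z k" "x \<in> Omega" "y \<in> Omega"
  shows "dd (w k \<zeta> x) (w k \<zeta> y) \<le> \<eta> * dd x y"
proof (rule dd_mono_tm[OF _ _ assms(2,3)])
  fix i
  show "tm (w k \<zeta> x) (w k \<zeta> y) i \<le> \<eta> * tm x y i"
  proof (cases "\<bar>i\<bar> \<le> int k")
    case True
    have "dI (\<zeta> i (x i)) (\<zeta> i (y i)) \<le> \<eta> * dI (x i) (y i)"
      using Z_contr br_mem[OF assms(1) True] Omega_I assms(2,3) by blast
    hence "\<theta> ^ nat \<bar>i\<bar> * dI (\<zeta> i (x i)) (\<zeta> i (y i)) \<le> \<theta> ^ nat \<bar>i\<bar> * (\<eta> * dI (x i) (y i))"
      using theta_pow(1)[of "nat \<bar>i\<bar>"] by (intro mult_left_mono) auto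
    thus ?thesis using True unfolding tm_def w_eq by (simp add: algebra_simps)
  next
    case False
    thus ?thesis unfolding w_eq tm_def using dI_self[OF p_fix(1)] eta tm_nonneg[OF assms(2,3), of i]
      by (simp add: tm_def)
  qed
qed (use eta in auto)

lemma dd_piK:
  assumes "x \<in> Omega" "y \<in> Omega"
  shows "dd (piK p k x) (piK p k y) \<le> dd x y"
proof -
  have "dd (piK p k x) (piK p k y) \<le> 1 * dd x y"
  proof (rule dd_mono_tm[OF _ _ assms])
    fix i show "tm (piK p k x) (piK p k y) i \<le> 1 * tm x y i"
      unfolding piK_def using dI_self[OF p_fix(1)] tm_nonneg[OF assms, of i]
      by (auto simp: tm_def)
  qed simp
  thus ?thesis by simp
qed

lemma dd_w_step:
  assumes "\<zeta> \<in> branches Z (Suc k)" "x \<in> Omega"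
  shows "dd (w (Suc k) \<zeta> x) (w k \<zeta> x) \<le> \<theta> ^ Suc k * Mb"
proof (rule dd_least)
  fix i
  show "tm (w (Suc k) \<zeta> x) (w k \<zeta> x) i \<le> \<theta> ^ Suc k * Mb"
  proof (cases "\<bar>i\<bar> \<le> int k")
    case True
    then show ?thesis unfolding tm_def w_eq
      using dI_self[OF w_Omega[OF assms(1,2), unfolded Omega_def, simplified, rule_format, of i]]
        theta_pow[of "Suc k"] Mb_nonneg
      by (auto simp: w_eq)
  next
    case False
    show ?thesis
    proof (cases "\<bar>i\<bar> \<le> int (Suc k)")
      case True
      hence n: "nat \<bar>i\<bar> = Suc k" using False by auto
      have "\<zeta> i (x i) \<in> Icar" using Z_inv br_mem[OF assms(1) True] Omega_I[OF assms(2)] by blast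
      hence "dI (\<zeta> i (x i)) p \<le> Mb" using Mb p_fix by blast
      thus ?thesis unfolding tm_def w_eq using True False n theta_pow[of "Suc k"]
        by (auto intro: mult_left_mono)
    next
      case F2: False
      thus ?thesis unfolding tm_def w_eq using False dI_self[OF p_fix(1)] theta_pow[of "Suc k"] Mb_nonneg
        by auto
    qed
  qed
qed

definition S where "S = holder_semi dI \<theta> p \<beta> f"

lemma hq_bdd: "bdd_above (holder_quots dI \<theta> p \<beta> f)"
  using f_C unfolding in_C_def by (elim conjE)

lemma hq_mem: "x \<in> Omega \<Longrightarrow> y \<in> Omega \<Longrightarrow> x \<noteq> y \<Longrightarrow>
  \<bar>f (piK p k x) - f (piK p k y)\<bar> / (dd x y) powr \<beta> \<in> holder_quots dI \<theta> p \<beta> f"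
  unfolding holder_quots_def dd_def by blast

lemma S_nonneg: "0 \<le> S"
proof -
  have x: "(\<lambda>_. 0) \<in> Omega" "(\<lambda>_. 1/2) \<in> Omega" "(\<lambda>_. (0::real)) \<noteq> (\<lambda>_. 1/2)"
    using const_Omega zero_Icar half_Icar by (auto simp: fun_eq_iff)
  have "0 \<le> \<bar>f (piK p 0 (\<lambda>_. 0)) - f (piK p 0 (\<lambda>_. 1/2))\<bar> / (dd (\<lambda>_. 0) (\<lambda>_. 1/2)) powr \<beta>"
    by simp
  also have "\<dots> \<le> S" unfolding S_def holder_semi_def
    by (rule cSup_upper[OF hq_mem[OF x] hq_bdd])
  finally show ?thesis .
qed

lemma holder_f:
  assumes "u \<in> Omega" "v \<in> Omega"
  shows "\<bar>f (piK p k u) - f (piK p k v)\<bar> \<le> S * dd u v powr \<beta>"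
proof (cases "u = v")
  case True thus ?thesis using S_nonneg by simp
next
  case False
  have pos: "0 < dd u v powr \<beta>" using dd_pos[OF assms False] by simp
  have "\<bar>f (piK p k u) - f (piK p k v)\<bar> / (dd u v) powr \<beta> \<le> S"
    unfolding S_def holder_semi_def by (rule cSup_upper[OF hq_mem[OF assms False] hq_bdd])
  thus ?thesis using pos by (simp add: divide_le_eq)
qed

end


lemma avg_le: "finite A \<Longrightarrow> A \<noteq> {} \<Longrightarrow> (\<And>a. a \<in> A \<Longrightarrow> X a \<le> (c::real)) \<Longrightarrow>
   (\<Sum>a\<in>A. X a) / real (card A) \<le> c"
  using sum_bounded_above[of A X c] by (simp add: divide_le_eq card_gt_0_iff mult.commute)

lemma avg_ge: "finite A \<Longrightarrow> A \<noteq> {} \<Longrightarrow> (\<And>a. a \<in> A \<Longrightarrow> (c::real) \<le> X a) \<Longrightarrow>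
   c \<le> (\<Sum>a\<in>A. X a) / real (card A)"
  using sum_bounded_below[of A c X] by (simp add: le_divide_eq card_gt_0_iff mult.commute)

lemma avg_abs_le: assumes "finite A" "A \<noteq> {}" "\<And>a. a \<in> A \<Longrightarrow> \<bar>X a\<bar> \<le> (c::real)"
  shows "\<bar>(\<Sum>a\<in>A. X a) / real (card A)\<bar> \<le> c"
proof -
  have 1: "(\<Sum>a\<in>A. X a) / real (card A) \<le> c"
    by (rule avg_le[OF assms(1,2)]) (use assms(3) abs_le_iff in force)
  have 2: "-c \<le> (\<Sum>a\<in>A. X a) / real (card A)"
    by (rule avg_ge[OF assms(1,2)]) (use assms(3) abs_le_iff in force)
  show ?thesis using 1 2 by (auto simp: abs_le_iff)
qed

context rpf begin

definition Fb where "Fb = Sup {\<bar>f x\<bar> | x. x \<in> Omega}"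

lemma f_bound: "x \<in> Omega \<Longrightarrow> \<bar>f x\<bar> \<le> Fb"
  unfolding Fb_def by (rule cSup_upper) (use f_C in_C_def in auto)

lemma Z_ne: "Z \<noteq> {}"
proof -
  have "p \<in> {s\<in>Icar. \<tau> s = p}" using p_fix by auto
  thus ?thesis using Z_full p_fix(1) by auto
qed

lemma card_br: "card (branches Z k) = card Z ^ (2 * k + 1)"
proof -
  have "card (branches Z k) = (\<Prod>i\<in>{- int k..int k}. card Z)"
    unfolding branches_def by (rule card_PiE) simp
  also have "\<dots> = card Z ^ card {- int k..int k}" by simp
  also have "card {- int k..int k} = 2 * k + 1" by simp
  finally show ?thesis .
qed

lemma finite_br: "finite (branches Z k)"
  unfolding branches_def using Z_fin by (intro finite_PiE) auto

lemma br_ne: "branches Z k \<noteq> {}"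
  unfolding branches_def using Z_ne by (simp add: PiE_eq_empty_iff)

definition G where "G \<Phi> z = exp (f z) * \<Phi> z"

lemma Pk_eq: "Pk Z p f k \<Phi> x = (\<Sum>\<zeta>\<in>branches Z k. G \<Phi> (w k \<zeta> x)) / real (card (branches Z k))"
  unfolding Pk_def card_br G_def w_def by simp

lemma Pk_lin: "Pk Z p f k (\<lambda>z. \<alpha> * \<Phi> z + \<gamma> * \<Psi> z) x = \<alpha> * Pk Z p f k \<Phi> x + \<gamma> * Pk Z p f k \<Psi> x"
  unfolding Pk_eq G_def by (simp add: sum.distrib sum_distrib_left algebra_simps add_divide_distrib)

lemma Pk_cong: "x \<in> Omega \<Longrightarrow> (\<And>z. z \<in> Omega \<Longrightarrow> \<Phi> z = \<Psi> z) \<Longrightarrow> Pk Z p f k \<Phi> x = Pk Z p f k \<Psi> x"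
  unfolding Pk_eq G_def using w_Omega by (intro arg_cong2[where f="(/)"] sum.cong) auto

lemma Pk_nonneg: "x \<in> Omega \<Longrightarrow> (\<And>z. z \<in> Omega \<Longrightarrow> 0 \<le> \<Phi> z) \<Longrightarrow> 0 \<le> Pk Z p f k \<Phi> x"
  unfolding Pk_eq G_def using w_Omega by (intro divide_nonneg_nonneg sum_nonneg) auto

lemma Pk_diff: assumes "x \<in> Omega" "\<And>z. z \<in> Omega \<Longrightarrow> \<bar>\<Phi> z - \<Psi> z\<bar> \<le> D"
  shows "\<bar>Pk Z p f k \<Phi> x - Pk Z p f k \<Psi> x\<bar> \<le> exp Fb * D"
proof -
  have "Pk Z p f k \<Phi> x - Pk Z p f k \<Psi> x = Pk Z p f k (\<lambda>z. 1 * \<Phi> z + (-1) * \<Psi> z) x"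
    using Pk_lin[where \<alpha>=1 and \<gamma>="-1" and \<Phi>=\<Phi> and \<Psi>=\<Psi> and k=k and x=x] by simp
  also have "\<bar>\<dots>\<bar> \<le> exp Fb * D" unfolding Pk_eq
  proof (rule avg_abs_le[OF finite_br br_ne])
    fix \<zeta> assume z: "\<zeta> \<in> branches Z k"
    have wo: "w k \<zeta> x \<in> Omega" by (rule w_Omega[OF z assms(1)])
    have "\<bar>G (\<lambda>z. 1 * \<Phi> z + - 1 * \<Psi> z) (w k \<zeta> x)\<bar> = exp (f (w k \<zeta> x)) * \<bar>\<Phi> (w k \<zeta> x) - \<Psi> (w k \<zeta> x)\<bar>"
      unfolding G_def by (simp add: abs_mult)
    also have "\<dots> \<le> exp Fb * D"
      using f_bound[OF wo] assms(2)[OF wo] by (intro mult_mono) auto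
    finally show "\<bar>G (\<lambda>z. 1 * \<Phi> z + - 1 * \<Psi> z) (w k \<zeta> x)\<bar> \<le> exp Fb * D" .
  qed
  finally show ?thesis .
qed

lemma Pk_lower: assumes "x \<in> Omega" "0 \<le> m" "\<And>z. z \<in> Omega \<Longrightarrow> m \<le> \<Phi> z"
  shows "exp (- Fb) * m \<le> Pk Z p f k \<Phi> x"
  unfolding Pk_eq
proof (rule avg_ge[OF finite_br br_ne])
  fix \<zeta> assume z: "\<zeta> \<in> branches Z k"
  have wo: "w k \<zeta> x \<in> Omega" by (rule w_Omega[OF z assms(1)])
  show "exp (- Fb) * m \<le> G \<Phi> (w k \<zeta> x)" unfolding G_def
    using f_bound[OF wo] assms(3)[OF wo] assms(2) by (intro mult_mono) auto
qed

definition cone where "cone c = {\<Phi>. \<forall>x\<in>Omega. 0 \<le> \<Phi> x \<and> (\<forall>y\<in>Omega. \<Phi> x \<le> exp (c * dd x y powr \<beta>) * \<Phi> y)}"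

definition r where "r = \<eta> powr \<beta>"

lemma r_pos: "0 < r" and r_lt1: "r < 1"
  unfolding r_def using eta beta powr_less_mono2[of \<beta> \<eta> 1] by auto

lemma coneD: "\<Phi> \<in> cone c \<Longrightarrow> x \<in> Omega \<Longrightarrow> y \<in> Omega \<Longrightarrow> \<Phi> x \<le> exp (c * dd x y powr \<beta>) * \<Phi> y"
  and cone_nonneg: "\<Phi> \<in> cone c \<Longrightarrow> x \<in> Omega \<Longrightarrow> 0 \<le> \<Phi> x"
  unfolding cone_def by auto

lemma G_cone:
  assumes "\<Phi> \<in> cone c" "0 \<le> c" "\<zeta> \<in> branches Z k" "x \<in> Omega" "y \<in> Omega"
  shows "G \<Phi> (w k \<zeta> x) \<le> exp ((S * r + c * r) * dd x y powr \<beta>) * G \<Phi> (w k \<zeta> y)"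
proof -
  define u where "u = w k \<zeta> x"
  define v where "v = w k \<zeta> y"
  define t where "t = dd x y powr \<beta>"
  have u: "u \<in> Omega" and v: "v \<in> Omega" unfolding u_def v_def using w_Omega assms by auto
  have "dd u v powr \<beta> \<le> (\<eta> * dd x y) powr \<beta>"
    unfolding u_def v_def using dd_w_contract[OF assms(3,4,5)] dd_nonneg w_Omega assms beta
    by (intro powr_mono2) auto
  also have "\<dots> = r * t" unfolding r_def t_def using eta dd_nonneg assms
    by (simp add: powr_mult)
  finally have d: "dd u v powr \<beta> \<le> r * t" .
  have "f u - f v \<le> S * dd u v powr \<beta>"
    using holder_f[OF u v, of k] unfolding u_def v_def piK_w[OF le_refl] by simp
  also have "\<dots> \<le> S * (r * t)" using d S_nonneg by (rule mult_left_mono)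
  finally have fu: "f u \<le> f v + S * r * t" by simp
  have "\<Phi> u \<le> exp (c * dd u v powr \<beta>) * \<Phi> v" by (rule coneD[OF assms(1) u v])
  also have "\<dots> \<le> exp (c * (r * t)) * \<Phi> v"
    using d assms(2) cone_nonneg[OF assms(1) v] by (intro mult_right_mono) (auto intro: mult_left_mono)
  finally have pu: "\<Phi> u \<le> exp (c * r * t) * \<Phi> v" by (simp add: mult.assoc)
  have "exp (f u) * \<Phi> u \<le> exp (f v + S * r * t) * (exp (c * r * t) * \<Phi> v)"
    using fu pu cone_nonneg[OF assms(1) u] by (intro mult_mono) auto
  also have "\<dots> = exp ((S * r + c * r) * t) * (exp (f v) * \<Phi> v)"
    by (simp add: exp_add algebra_simps)
  finally show ?thesis unfolding G_def u_def v_def t_def .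
qed

lemma Pk_cone:
  assumes "\<Phi> \<in> cone c" "0 \<le> c" "x \<in> Omega" "y \<in> Omega"
  shows "Pk Z p f k \<Phi> x \<le> exp ((S * r + c * r) * dd x y powr \<beta>) * Pk Z p f k \<Phi> y"
proof -
  have "(\<Sum>\<zeta>\<in>branches Z k. G \<Phi> (w k \<zeta> x)) \<le> (\<Sum>\<zeta>\<in>branches Z k. exp ((S * r + c * r) * dd x y powr \<beta>) * G \<Phi> (w k \<zeta> y))"
    using G_cone[OF assms(1,2) _ assms(3,4)] by (rule sum_mono)
  thus ?thesis unfolding Pk_eq by (simp add: sum_distrib_left[symmetric] divide_right_mono)
qed

end


lemma expm1_le: "0 \<le> (s::real) \<Longrightarrow> exp s - 1 \<le> s * exp s"
proof -
  assume s: "0 \<le> s"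
  have "1 + (-s) \<le> exp (-s)" by (rule exp_ge_add_one_self)
  hence "exp s * (1 - s) \<le> exp s * exp (-s)" by (intro mult_left_mono) auto
  also have "\<dots> = 1" by (simp add: exp_minus)
  finally show ?thesis by (simp add: algebra_simps)
qed

lemma two_sided:
  fixes X Y s K :: real
  assumes "0 \<le> X" "0 \<le> Y" "X \<le> exp s * Y" "Y \<le> exp s * X" "0 \<le> s" "X \<le> K" "Y \<le> K"
  shows "\<bar>X - Y\<bar> \<le> (exp s - 1) * K"
proof -
  have e: "0 \<le> exp s - 1" using assms(5) by simp
  have "X - Y \<le> (exp s - 1) * Y" using assms(3) by (simp add: algebra_simps)
  also have "\<dots> \<le> (exp s - 1) * K" by (rule mult_left_mono[OF assms(7) e])
  finally have 1: "X - Y \<le> (exp s - 1) * K" .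
  have "Y - X \<le> (exp s - 1) * X" using assms(4) by (simp add: algebra_simps)
  also have "\<dots> \<le> (exp s - 1) * K" by (rule mult_left_mono[OF assms(6) e])
  finally have 2: "Y - X \<le> (exp s - 1) * K" .
  show ?thesis using 1 2 by (simp add: abs_le_iff)
qed

lemma conv_of_geom:
  fixes u :: "nat \<Rightarrow> real"
  assumes "\<And>k. \<bar>u (Suc k) - u k\<bar> \<le> C * q ^ k" "0 \<le> q" "q < 1"
  shows "convergent u"
proof -
  have "summable (\<lambda>k. C * q ^ k)" using assms(2,3) by (intro summable_mult summable_geometric) simp
  hence "summable (\<lambda>k. u (Suc k) - u k)"
    by (rule summable_comparison_test[rotated]) (use assms(1) in auto)
  hence "(\<lambda>n. \<Sum>k<n. u (Suc k) - u k) \<longlonglongrightarrow> (\<Sum>k. u (Suc k) - u k)" by (rule summable_LIMSEQ)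
  hence "(\<lambda>n. u n - u 0) \<longlonglongrightarrow> (\<Sum>k. u (Suc k) - u k)" by (simp add: sum_lessThan_telescope)
  hence "(\<lambda>n. (u n - u 0) + u 0) \<longlonglongrightarrow> (\<Sum>k. u (Suc k) - u k) + u 0" by (intro tendsto_add) auto
  thus ?thesis unfolding convergent_def by auto
qed

context rpf begin

definition x0 where "x0 = (\<lambda>_::int. p)"

lemma x0_Omega: "x0 \<in> Omega" unfolding x0_def using const_Omega p_fix by simp

lemma cone_bound: assumes "\<Phi> \<in> cone c" "0 \<le> c" "x \<in> Omega" "y \<in> Omega"
  shows "\<Phi> x \<le> exp (c * T) * \<Phi> y"
proof -
  have "\<Phi> x \<le> exp (c * dd x y powr \<beta>) * \<Phi> y" by (rule coneD[OF assms(1,3,4)])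
  also have "\<dots> \<le> exp (c * T) * \<Phi> y" using ddb_le_T[OF assms(3,4)] assms(2) cone_nonneg[OF assms(1,4)]
    by (intro mult_right_mono) (auto intro: mult_left_mono)
  finally show ?thesis .
qed

definition Kc where "Kc \<Phi> c = exp (c * T) * \<Phi> x0"

lemma cone_le_Kc: "\<Phi> \<in> cone c \<Longrightarrow> 0 \<le> c \<Longrightarrow> x \<in> Omega \<Longrightarrow> \<Phi> x \<le> Kc \<Phi> c"
  unfolding Kc_def using cone_bound x0_Omega by blast

lemma Kc_nonneg: "\<Phi> \<in> cone c \<Longrightarrow> 0 \<le> Kc \<Phi> c"
  unfolding Kc_def using cone_nonneg[OF _ x0_Omega] by simp

lemma cone_mono: assumes "c \<le> c'" shows "cone c \<subseteq> cone c'"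
proof
  fix \<Phi> assume h: "\<Phi> \<in> cone c"
  show "\<Phi> \<in> cone c'" unfolding cone_def
  proof (intro CollectI ballI conjI)
    fix x assume x: "x \<in> Omega" show "0 \<le> \<Phi> x" using cone_nonneg[OF h x] .
  next
    fix x y assume x: "x \<in> Omega" and y: "y \<in> Omega"
    have "\<Phi> x \<le> exp (c * dd x y powr \<beta>) * \<Phi> y" by (rule coneD[OF h x y])
    also have "\<dots> \<le> exp (c' * dd x y powr \<beta>) * \<Phi> y" using cone_nonneg[OF h y] assms
      by (intro mult_right_mono) (auto intro: mult_right_mono)
    finally show "\<Phi> x \<le> exp (c' * dd x y powr \<beta>) * \<Phi> y" .
  qed
qed

lemma cone_scale: assumes "0 \<le> \<alpha>" "\<Phi> \<in> cone c" shows "(\<lambda>z. \<alpha> * \<Phi> z) \<in> cone c"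
  unfolding cone_def
proof (intro CollectI ballI conjI)
  fix x assume x: "x \<in> Omega" show "0 \<le> \<alpha> * \<Phi> x" using cone_nonneg[OF assms(2) x] assms(1) by simp
next
  fix x y assume x: "x \<in> Omega" and y: "y \<in> Omega"
  have "\<alpha> * \<Phi> x \<le> \<alpha> * (exp (c * dd x y powr \<beta>) * \<Phi> y)"
    by (rule mult_left_mono[OF coneD[OF assms(2) x y] assms(1)])
  thus "\<alpha> * \<Phi> x \<le> exp (c * dd x y powr \<beta>) * (\<alpha> * \<Phi> y)" by (simp add: algebra_simps)
qed

lemma cone_cong: "\<Phi> \<in> cone c \<Longrightarrow> (\<And>z. z \<in> Omega \<Longrightarrow> \<Psi> z = \<Phi> z) \<Longrightarrow> \<Psi> \<in> cone c"
  unfolding cone_def by auto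

lemma cone_lip: assumes "\<Phi> \<in> cone c" "0 \<le> c" "x \<in> Omega" "y \<in> Omega"
  shows "\<bar>\<Phi> x - \<Phi> y\<bar> \<le> c * exp (c * T) * Kc \<Phi> c * dd x y powr \<beta>"
proof -
  define s where "s = c * dd x y powr \<beta>"
  have s0: "0 \<le> s" and sT: "s \<le> c * T" unfolding s_def using assms(2) ddb_le_T[OF assms(3,4)]
    by (auto intro: mult_left_mono)
  have "\<bar>\<Phi> x - \<Phi> y\<bar> \<le> (exp s - 1) * Kc \<Phi> c"
  proof (rule two_sided[OF cone_nonneg[OF assms(1,3)] cone_nonneg[OF assms(1,4)] _ _ s0
        cone_le_Kc[OF assms(1,2,3)] cone_le_Kc[OF assms(1,2,4)]])
    show "\<Phi> x \<le> exp s * \<Phi> y" unfolding s_def by (rule coneD[OF assms(1,3,4)])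
    show "\<Phi> y \<le> exp s * \<Phi> x" unfolding s_def using coneD[OF assms(1,4,3)] dd_sym[OF assms(3,4)] by simp
  qed
  also have "\<dots> \<le> (s * exp (c * T)) * Kc \<Phi> c"
  proof (rule mult_right_mono[OF _ Kc_nonneg[OF assms(1)]])
    have "exp s - 1 \<le> s * exp s" by (rule expm1_le[OF s0])
    also have "\<dots> \<le> s * exp (c * T)" using sT s0 by (intro mult_left_mono) auto
    finally show "exp s - 1 \<le> s * exp (c * T)" .
  qed
  also have "\<dots> = c * exp (c * T) * Kc \<Phi> c * dd x y powr \<beta>" unfolding s_def by (simp add: algebra_simps)
  finally show ?thesis .
qed

lemma cone_cont: assumes "\<Phi> \<in> cone c" "0 \<le> c" shows "d_continuous dI \<theta> \<Phi>"
  unfolding d_continuous_def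
proof (intro ballI allI impI)
  fix x e assume x: "x \<in> Omega" and e: "(0::real) < e"
  define L where "L = c * exp (c * T) * Kc \<Phi> c"
  have L0: "0 \<le> L" unfolding L_def using assms Kc_nonneg by simp
  define \<delta> where "\<delta> = (e / (L + 1)) powr (1 / \<beta>)"
  have \<delta>: "0 < \<delta>" unfolding \<delta>_def using e L0 by simp
  show "\<exists>\<delta>>0. \<forall>y\<in>Omega. dOm dI \<theta> x y < \<delta> \<longrightarrow> \<bar>\<Phi> y - \<Phi> x\<bar> < e"
  proof (intro exI[of _ \<delta>] conjI \<delta> ballI impI)
    fix y assume y: "y \<in> Omega" and d: "dOm dI \<theta> x y < \<delta>"
    have "dd x y powr \<beta> < \<delta> powr \<beta>"
      using d dd_nonneg[OF x y] beta unfolding dd_def by (intro powr_less_mono2) auto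
    also have "\<delta> powr \<beta> = e / (L + 1)" unfolding \<delta>_def using beta e L0 by (simp add: powr_powr)
    finally have db: "dd x y powr \<beta> < e / (L + 1)" .
    have "\<bar>\<Phi> y - \<Phi> x\<bar> = \<bar>\<Phi> x - \<Phi> y\<bar>" by simp
    also have "\<dots> \<le> L * dd x y powr \<beta>" unfolding L_def by (rule cone_lip[OF assms x y])
    also have "\<dots> \<le> L * (e / (L + 1))" using db L0 by (intro mult_left_mono) auto
    also have "\<dots> < e" using L0 e by (simp add: field_simps)
    finally show "\<bar>\<Phi> y - \<Phi> x\<bar> < e" .
  qed
qed

lemma cont_meas: fixes \<Phi> :: "(int \<Rightarrow> real) \<Rightarrow> real" assumes "d_continuous dI \<theta> \<Phi>" shows "\<Phi> \<in> borel_measurable \<nu>0"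
proof (rule borel_measurableI)
  fix U :: "real set" assume U: "open U"
  have "d_open dI \<theta> (\<Phi> -` U \<inter> Omega)" unfolding d_open_def
  proof (intro conjI ballI)
    fix x assume "x \<in> \<Phi> -` U \<inter> Omega"
    hence x: "x \<in> Omega" "\<Phi> x \<in> U" by auto
    obtain e where e: "e > 0" "\<And>t. dist t (\<Phi> x) < e \<Longrightarrow> t \<in> U" using U x(2) unfolding open_dist by blast
    obtain \<delta> where \<delta>: "\<delta> > 0" "\<forall>y\<in>Omega. dOm dI \<theta> x y < \<delta> \<longrightarrow> \<bar>\<Phi> y - \<Phi> x\<bar> < e"
      using assms x(1) e(1) unfolding d_continuous_def by blast
    show "\<exists>e>0. \<forall>y\<in>Omega. dOm dI \<theta> x y < e \<longrightarrow> y \<in> \<Phi> -` U \<inter> Omega"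
      using \<delta> e(2) by (auto simp: dist_real_def)
  qed auto
  hence "\<Phi> -` U \<inter> Omega \<in> sigma_sets Omega {U. d_open dI \<theta> U}" by (intro sigma_sets.Basic) auto
  thus "\<Phi> -` U \<inter> space \<nu>0 \<in> sets \<nu>0" using nu_space nu_sets by simp
qed

lemma finite_nu: "finite_measure \<nu>0"
  using nu_prob by (simp add: prob_space_def)

lemma bounded_integrable: fixes \<Phi> :: "(int \<Rightarrow> real) \<Rightarrow> real" assumes "\<Phi> \<in> borel_measurable \<nu>0" "\<And>x. x \<in> Omega \<Longrightarrow> \<bar>\<Phi> x\<bar> \<le> B"
  shows "integrable \<nu>0 \<Phi>"
proof (rule finite_measure.integrable_const_bound[where B=B])
  show "finite_measure \<nu>0" by (rule finite_nu)
  show "AE x in \<nu>0. norm (\<Phi> x) \<le> B" using assms(2) nu_space by (auto intro!: AE_I2)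
  show "\<Phi> \<in> borel_measurable \<nu>0" by (rule assms(1))
qed

lemma cone_integrable: assumes "\<Phi> \<in> cone c" "0 \<le> c" shows "integrable \<nu>0 \<Phi>"
  by (rule bounded_integrable[OF cont_meas[OF cone_cont[OF assms]], of "Kc \<Phi> c"])
     (use cone_le_Kc[OF assms] cone_nonneg[OF assms(1)] in auto)

lemma cone_in_C: assumes "\<Phi> \<in> cone c" "0 \<le> c" shows "in_C dI \<theta> p \<beta> \<Phi>"
  unfolding in_C_def
proof (intro conjI)
  show "d_continuous dI \<theta> \<Phi>" by (rule cone_cont[OF assms])
  show "bdd_above {\<bar>\<Phi> x\<bar> |x. x \<in> Omega}"
    by (rule bdd_aboveI[of _ "Kc \<Phi> c"]) (use cone_le_Kc[OF assms] cone_nonneg[OF assms(1)] in auto)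
  define L where "L = c * exp (c * T) * Kc \<Phi> c"
  have L0: "0 \<le> L" unfolding L_def using assms Kc_nonneg by simp
  show "bdd_above (holder_quots dI \<theta> p \<beta> \<Phi>)"
  proof (rule bdd_aboveI[of _ L])
    fix q assume "q \<in> holder_quots dI \<theta> p \<beta> \<Phi>"
    then obtain k x y where q: "q = \<bar>\<Phi> (piK p k x) - \<Phi> (piK p k y)\<bar> / (dd x y) powr \<beta>"
      and xy: "x \<in> Omega" "y \<in> Omega" "x \<noteq> y"
      unfolding holder_quots_def dd_def by blast
    have pos: "0 < dd x y powr \<beta>" using dd_pos[OF xy] by simp
    have "\<bar>\<Phi> (piK p k x) - \<Phi> (piK p k y)\<bar> \<le> L * dd (piK p k x) (piK p k y) powr \<beta>"
      unfolding L_def by (rule cone_lip[OF assms piK_Omega piK_Omega]) (use xy in auto)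
    also have "\<dots> \<le> L * dd x y powr \<beta>"
      using L0 dd_piK[OF xy(1,2)] dd_nonneg piK_Omega xy beta by (intro mult_left_mono powr_mono2) auto
    finally show "q \<le> L" unfolding q using pos by (simp add: divide_le_eq)
  qed
qed

end


lemma sum_PiE_insert:
  fixes H :: "(int \<Rightarrow> 'b) \<Rightarrow> real"
  assumes "a \<notin> S" "\<And>g y. H (g(a:=y)) = H g"
  shows "(\<Sum>\<zeta>\<in>PiE (insert a S) (\<lambda>_. Z). H \<zeta>) = real (card Z) * (\<Sum>g\<in>PiE S (\<lambda>_. Z). H g)"
proof -
  have "(\<Sum>\<zeta>\<in>PiE (insert a S) (\<lambda>_. Z). H \<zeta>) = (\<Sum>\<zeta>\<in>(\<lambda>(y, g). g(a := y)) ` (Z \<times> PiE S (\<lambda>_. Z)). H \<zeta>)"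
    by (simp add: PiE_insert_eq)
  also have "\<dots> = (\<Sum>yg\<in>Z \<times> PiE S (\<lambda>_. Z). (H \<circ> (\<lambda>(y, g). g(a := y))) yg)"
    by (rule sum.reindex) (use inj_combinator[OF assms(1), of "\<lambda>_. Z"] in simp)
  also have "\<dots> = (\<Sum>(y,g)\<in>Z \<times> PiE S (\<lambda>_. Z). H g)"
    by (intro sum.cong) (auto simp: assms(2))
  also have "\<dots> = (\<Sum>y\<in>Z. \<Sum>g\<in>PiE S (\<lambda>_. Z). H g)"
    by (rule sum.cartesian_product[symmetric])
  also have "\<dots> = real (card Z) * (\<Sum>g\<in>PiE S (\<lambda>_. Z). H g)" by simp
  finally show ?thesis .
qed

lemma powr_pow_swap: "0 \<le> (x::real) \<Longrightarrow> (x ^ n) powr b = (x powr b) ^ n"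
  by (induction n) (auto simp: powr_mult)

context rpf begin

lemma w_Omega': assumes "\<zeta> \<in> branches Z m" "k \<le> m" "x \<in> Omega" shows "w k \<zeta> x \<in> Omega"
  unfolding Omega_def w_eq using br_mem[OF assms(1)] assms(2) Z_inv Omega_I[OF assms(3)] p_fix by auto

lemma br_Suc_set: "{- int (Suc k)..int (Suc k)} = insert (int (Suc k)) (insert (- int (Suc k)) {- int k..int k})"
  by auto

lemma w_upd: "int k < \<bar>a\<bar> \<Longrightarrow> w k (g(a := y)) x = w k g x"
  unfolding w_eq by (auto simp: fun_eq_iff)

lemma sum_br_Suc:
  "(\<Sum>\<zeta>\<in>branches Z (Suc k). G \<Phi> (w k \<zeta> x)) = real (card Z) * (real (card Z) * (\<Sum>\<zeta>\<in>branches Z k. G \<Phi> (w k \<zeta> x)))"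
proof -
  have "(\<Sum>\<zeta>\<in>branches Z (Suc k). G \<Phi> (w k \<zeta> x)) =
     (\<Sum>\<zeta>\<in>PiE (insert (int (Suc k)) (insert (- int (Suc k)) {- int k..int k})) (\<lambda>_. Z). G \<Phi> (w k \<zeta> x))"
    unfolding branches_def br_Suc_set ..
  also have "\<dots> = real (card Z) * (\<Sum>\<zeta>\<in>PiE (insert (- int (Suc k)) {- int k..int k}) (\<lambda>_. Z). G \<Phi> (w k \<zeta> x))"
    by (rule sum_PiE_insert) (auto simp: w_upd)
  also have "(\<Sum>\<zeta>\<in>PiE (insert (- int (Suc k)) {- int k..int k}) (\<lambda>_. Z). G \<Phi> (w k \<zeta> x))
      = real (card Z) * (\<Sum>\<zeta>\<in>PiE {- int k..int k} (\<lambda>_. Z). G \<Phi> (w k \<zeta> x))"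
    by (rule sum_PiE_insert) (auto simp: w_upd)
  finally show ?thesis unfolding branches_def .
qed

lemma Pk_as_Suc:
  "Pk Z p f k \<Phi> x = (\<Sum>\<zeta>\<in>branches Z (Suc k). G \<Phi> (w k \<zeta> x)) / real (card (branches Z (Suc k)))"
proof -
  have c: "real (card (branches Z (Suc k))) = real (card Z) * (real (card Z) * real (card (branches Z k)))"
    unfolding card_br by (simp add: algebra_simps power_add power2_eq_square)
  have "0 < card Z" using Z_ne Z_fin by (simp add: card_gt_0_iff)
  thus ?thesis unfolding Pk_eq sum_br_Suc c by simp
qed

definition q0 where "q0 = \<theta> powr \<beta>"

lemma q0: "0 \<le> q0" "q0 < 1"
  unfolding q0_def using theta beta powr_less_mono2[of \<beta> \<theta> 1] by auto

lemma Dk_eq: "(\<theta> ^ n * Mb) powr \<beta> = T * q0 ^ n"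
  unfolding T_def q0_def using theta Mb_nonneg by (simp add: powr_mult powr_pow_swap)

lemma Pk_step:
  assumes "\<Phi> \<in> cone c" "0 \<le> c" "x \<in> Omega"
  shows "\<bar>Pk Z p f (Suc k) \<Phi> x - Pk Z p f k \<Phi> x\<bar>
     \<le> ((S + c) * T * exp ((S + c) * T) * exp Fb * Kc \<Phi> c * q0) * q0 ^ k"
proof -
  define E where "E = exp Fb * Kc \<Phi> c"
  have E0: "0 \<le> E" unfolding E_def using Kc_nonneg[OF assms(1)] by simp
  define Dk where "Dk = T * q0 ^ Suc k"
  have Dk0: "0 \<le> Dk" unfolding Dk_def using T_nonneg q0 by simp
  have DkT: "Dk \<le> T" unfolding Dk_def
    using T_nonneg q0 power_le_one[of q0 "Suc k"] by (intro mult_left_le) auto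
  have Sc: "0 \<le> S + c" using S_nonneg assms(2) by simp
  have "Pk Z p f (Suc k) \<Phi> x - Pk Z p f k \<Phi> x
     = (\<Sum>\<zeta>\<in>branches Z (Suc k). G \<Phi> (w (Suc k) \<zeta> x) - G \<Phi> (w k \<zeta> x)) / real (card (branches Z (Suc k)))"
    unfolding Pk_as_Suc[of k] Pk_eq[of "Suc k"] by (simp add: sum_subtractf diff_divide_distrib)
  also have "\<bar>\<dots>\<bar> \<le> (exp ((S + c) * Dk) - 1) * E"
  proof (rule avg_abs_le[OF finite_br br_ne])
    fix \<zeta> assume z: "\<zeta> \<in> branches Z (Suc k)"
    define u where "u = w (Suc k) \<zeta> x"
    define v where "v = w k \<zeta> x"
    have u: "u \<in> Omega" unfolding u_def by (rule w_Omega[OF z assms(3)])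
    have v: "v \<in> Omega" unfolding v_def by (rule w_Omega'[OF z _ assms(3)]) simp
    have duv: "dd u v powr \<beta> \<le> Dk"
    proof -
      have "dd u v powr \<beta> \<le> (\<theta> ^ Suc k * Mb) powr \<beta>"
        unfolding u_def v_def using dd_w_step[OF z assms(3)] dd_nonneg u v beta
        by (intro powr_mono2) (auto simp: u_def v_def)
      thus ?thesis unfolding Dk_eq Dk_def .
    qed
    have dvu: "dd v u powr \<beta> \<le> Dk" using duv dd_sym[OF u v] by simp
    have fuv: "\<bar>f u - f v\<bar> \<le> S * Dk"
    proof -
      have "\<bar>f (piK p (Suc k) u) - f (piK p (Suc k) v)\<bar> \<le> S * dd u v powr \<beta>" by (rule holder_f[OF u v])
      also have "\<dots> \<le> S * Dk" using duv S_nonneg by (rule mult_left_mono)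
      finally show ?thesis unfolding u_def v_def piK_w[OF le_refl] piK_w[OF le_SucI[OF le_refl]] .
    qed
    have GuGv: "G \<Phi> u \<le> exp ((S + c) * Dk) * G \<Phi> v"
    proof -
      have "\<Phi> u \<le> exp (c * dd u v powr \<beta>) * \<Phi> v" by (rule coneD[OF assms(1) u v])
      also have "\<dots> \<le> exp (c * Dk) * \<Phi> v" using duv assms(2) cone_nonneg[OF assms(1) v]
        by (intro mult_right_mono) (auto intro: mult_left_mono)
      finally have 1: "\<Phi> u \<le> exp (c * Dk) * \<Phi> v" .
      have "exp (f u) * \<Phi> u \<le> exp (f v + S * Dk) * (exp (c * Dk) * \<Phi> v)"
        using fuv 1 cone_nonneg[OF assms(1) u] by (intro mult_mono) auto
      thus ?thesis unfolding G_def by (simp add: exp_add algebra_simps)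
    qed
    have GvGu: "G \<Phi> v \<le> exp ((S + c) * Dk) * G \<Phi> u"
    proof -
      have "\<Phi> v \<le> exp (c * dd v u powr \<beta>) * \<Phi> u" by (rule coneD[OF assms(1) v u])
      also have "\<dots> \<le> exp (c * Dk) * \<Phi> u" using dvu assms(2) cone_nonneg[OF assms(1) u]
        by (intro mult_right_mono) (auto intro: mult_left_mono)
      finally have 1: "\<Phi> v \<le> exp (c * Dk) * \<Phi> u" .
      have "exp (f v) * \<Phi> v \<le> exp (f u + S * Dk) * (exp (c * Dk) * \<Phi> u)"
        using fuv 1 cone_nonneg[OF assms(1) v] by (intro mult_mono) auto
      thus ?thesis unfolding G_def by (simp add: exp_add algebra_simps)
    qed
    have GE: "G \<Phi> z \<le> E" if "z \<in> Omega" for z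
      unfolding G_def E_def using f_bound[OF that] cone_le_Kc[OF assms(1,2) that] cone_nonneg[OF assms(1) that]
      by (intro mult_mono) auto
    have Gn: "0 \<le> G \<Phi> z" if "z \<in> Omega" for z
      unfolding G_def using cone_nonneg[OF assms(1) that] by simp
    show "\<bar>G \<Phi> (w (Suc k) \<zeta> x) - G \<Phi> (w k \<zeta> x)\<bar> \<le> (exp ((S + c) * Dk) - 1) * E"
      unfolding u_def[symmetric] v_def[symmetric]
      by (rule two_sided[OF Gn[OF u] Gn[OF v] GuGv GvGu _ GE[OF u] GE[OF v]]) (use Sc Dk0 in simp)
  qed
  also have "\<dots> \<le> ((S + c) * Dk * exp ((S + c) * T)) * E"
  proof (rule mult_right_mono[OF _ E0])
    have "exp ((S + c) * Dk) - 1 \<le> (S + c) * Dk * exp ((S + c) * Dk)" by (rule expm1_le) (use Sc Dk0 in simp)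
    also have "\<dots> \<le> (S + c) * Dk * exp ((S + c) * T)" using Sc Dk0 DkT
      by (intro mult_left_mono) (auto intro: mult_left_mono)
    finally show "exp ((S + c) * Dk) - 1 \<le> (S + c) * Dk * exp ((S + c) * T)" .
  qed
  also have "\<dots> = ((S + c) * T * exp ((S + c) * T) * exp Fb * Kc \<Phi> c * q0) * q0 ^ k"
    unfolding Dk_def E_def by (simp add: algebra_simps)
  finally show ?thesis .
qed

lemma Pk_conv: assumes "\<Phi> \<in> cone c" "0 \<le> c" "x \<in> Omega"
  shows "(\<lambda>k. Pk Z p f k \<Phi> x) \<longlonglongrightarrow> Ptr Z p f \<Phi> x"
proof -
  have "convergent (\<lambda>k. Pk Z p f k \<Phi> x)"
    by (rule conv_of_geom[OF Pk_step[OF assms] q0])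
  thus ?thesis unfolding Ptr_def by (simp add: convergent_LIMSEQ_iff)
qed

end

context rpf begin

lemma int_ge: fixes \<Phi> :: "(int \<Rightarrow> real) \<Rightarrow> real" shows "integrable \<nu>0 \<Phi> \<Longrightarrow> (\<And>x. x \<in> Omega \<Longrightarrow> c \<le> \<Phi> x) \<Longrightarrow> c \<le> integral\<^sup>L \<nu>0 \<Phi>"
  using prob_space.integral_ge_const[OF nu_prob, of \<Phi> c] nu_space by (auto intro: AE_I2)

lemma int_le: fixes \<Phi> :: "(int \<Rightarrow> real) \<Rightarrow> real" shows "integrable \<nu>0 \<Phi> \<Longrightarrow> (\<And>x. x \<in> Omega \<Longrightarrow> \<Phi> x \<le> c) \<Longrightarrow> integral\<^sup>L \<nu>0 \<Phi> \<le> c"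
  using prob_space.integral_le_const[OF nu_prob, of \<Phi> c] nu_space by (auto intro: AE_I2)

lemma int_cong: fixes \<Phi> \<Psi> :: "(int \<Rightarrow> real) \<Rightarrow> real"
  assumes "\<And>x. x \<in> Omega \<Longrightarrow> \<Phi> x = \<Psi> x" shows "integral\<^sup>L \<nu>0 \<Phi> = integral\<^sup>L \<nu>0 \<Psi>"
  by (rule Bochner_Integration.integral_cong[OF refl]) (use assms nu_space in auto)

lemma P_nonneg: assumes "\<Phi> \<in> cone c" "0 \<le> c" "x \<in> Omega" shows "0 \<le> Ptr Z p f \<Phi> x"
  by (rule LIMSEQ_le_const[OF Pk_conv[OF assms]]) (use Pk_nonneg[OF assms(3) cone_nonneg[OF assms(1)]] in auto)

lemma P_cone: assumes "\<Phi> \<in> cone c" "0 \<le> c" shows "Ptr Z p f \<Phi> \<in> cone (S * r + c * r)"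
  unfolding cone_def
proof (intro CollectI ballI conjI)
  fix x assume x: "x \<in> Omega" show "0 \<le> Ptr Z p f \<Phi> x" by (rule P_nonneg[OF assms x])
next
  fix x y assume x: "x \<in> Omega" and y: "y \<in> Omega"
  show "Ptr Z p f \<Phi> x \<le> exp ((S * r + c * r) * dd x y powr \<beta>) * Ptr Z p f \<Phi> y"
    by (rule LIMSEQ_le[OF Pk_conv[OF assms x] tendsto_mult_left[OF Pk_conv[OF assms y]]])
       (use Pk_cone[OF assms x y] in auto)
qed

lemma P_lin: assumes "\<Phi> \<in> cone c" "0 \<le> c" "\<Psi> \<in> cone c'" "0 \<le> c'" "x \<in> Omega"
  shows "Ptr Z p f (\<lambda>z. \<alpha> * \<Phi> z + \<gamma> * \<Psi> z) x = \<alpha> * Ptr Z p f \<Phi> x + \<gamma> * Ptr Z p f \<Psi> x"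
proof -
  have "(\<lambda>k. \<alpha> * Pk Z p f k \<Phi> x + \<gamma> * Pk Z p f k \<Psi> x) \<longlonglongrightarrow> \<alpha> * Ptr Z p f \<Phi> x + \<gamma> * Ptr Z p f \<Psi> x"
    by (intro tendsto_add tendsto_mult_left Pk_conv[OF assms(1,2,5)] Pk_conv[OF assms(3,4,5)])
  hence "(\<lambda>k. Pk Z p f k (\<lambda>z. \<alpha> * \<Phi> z + \<gamma> * \<Psi> z) x) \<longlonglongrightarrow> \<alpha> * Ptr Z p f \<Phi> x + \<gamma> * Ptr Z p f \<Psi> x"
    by (simp add: Pk_lin)
  thus ?thesis unfolding Ptr_def[of _ _ _ "(\<lambda>z. \<alpha> * \<Phi> z + \<gamma> * \<Psi> z)"] by (rule limI)
qed

lemma P_diff: assumes "\<Phi> \<in> cone c" "0 \<le> c" "\<Psi> \<in> cone c'" "0 \<le> c'" "x \<in> Omega"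
  "\<And>z. z \<in> Omega \<Longrightarrow> \<bar>\<Phi> z - \<Psi> z\<bar> \<le> D"
  shows "\<bar>Ptr Z p f \<Phi> x - Ptr Z p f \<Psi> x\<bar> \<le> exp Fb * D"
  by (rule LIMSEQ_le_const2[OF tendsto_rabs[OF tendsto_diff[OF Pk_conv[OF assms(1,2,5)] Pk_conv[OF assms(3,4,5)]]]])
     (use Pk_diff[OF assms(5,6)] in auto)

lemma P_lower: assumes "\<Phi> \<in> cone c" "0 \<le> c" "x \<in> Omega" "0 \<le> m" "\<And>z. z \<in> Omega \<Longrightarrow> m \<le> \<Phi> z"
  shows "exp (- Fb) * m \<le> Ptr Z p f \<Phi> x"
  by (rule LIMSEQ_le_const[OF Pk_conv[OF assms(1-3)]]) (use Pk_lower[OF assms(3-5)] in auto)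

lemma P_cong: assumes "x \<in> Omega" "\<And>z. z \<in> Omega \<Longrightarrow> \<Phi> z = \<Psi> z"
  shows "Ptr Z p f \<Phi> x = Ptr Z p f \<Psi> x"
  unfolding Ptr_def using Pk_cong[OF assms] by simp

lemma const1_cone: "(\<lambda>_. 1) \<in> cone 0"
  unfolding cone_def by simp

lemma lam_pos: "0 < lam"
proof -
  have i: "integrable \<nu>0 (Ptr Z p f (\<lambda>_. 1))"
    using nu_eigen cone_in_C[OF const1_cone] by blast
  have "exp (- Fb) * 1 \<le> lam" unfolding lambda_def
    by (rule int_ge[OF i]) (rule P_lower[OF const1_cone], auto)
  thus ?thesis using exp_gt_zero[of "-Fb"] by linarith
qed

definition Lr where "Lr \<Phi> = (\<lambda>x. if x \<in> Omega then Ptr Z p f \<Phi> x / lam else 0)"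

definition one where "one = (\<lambda>x. if x \<in> Omega then 1 else (0::real))"

lemma Lr_cone: assumes "\<Phi> \<in> cone c" "0 \<le> c" shows "Lr \<Phi> \<in> cone (S * r + c * r)"
  by (rule cone_cong[OF cone_scale[OF _ P_cone[OF assms], of "1 / lam"]]) (use lam_pos in \<open>auto simp: Lr_def\<close>)

lemma Lr_int: assumes "\<Phi> \<in> cone c" "0 \<le> c" shows "integral\<^sup>L \<nu>0 (Lr \<Phi>) = integral\<^sup>L \<nu>0 \<Phi>"
proof -
  have "integral\<^sup>L \<nu>0 (Lr \<Phi>) = integral\<^sup>L \<nu>0 (\<lambda>x. Ptr Z p f \<Phi> x / lam)"
    by (rule int_cong) (simp add: Lr_def)
  also have "\<dots> = integral\<^sup>L \<nu>0 (Ptr Z p f \<Phi>) / lam" by simp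
  also have "\<dots> = integral\<^sup>L \<nu>0 \<Phi>" using nu_eigen cone_in_C[OF assms] lam_pos by simp
  finally show ?thesis .
qed

lemma Lr_lin: assumes "\<Phi> \<in> cone c" "0 \<le> c" "\<Psi> \<in> cone c'" "0 \<le> c'"
  shows "Lr (\<lambda>z. \<alpha> * \<Phi> z + \<gamma> * \<Psi> z) = (\<lambda>z. \<alpha> * Lr \<Phi> z + \<gamma> * Lr \<Psi> z)"
  unfolding Lr_def using P_lin[OF assms] by (auto simp: fun_eq_iff add_divide_distrib)

lemma Lr_diff: assumes "\<Phi> \<in> cone c" "0 \<le> c" "\<Psi> \<in> cone c'" "0 \<le> c'"
  "\<And>z. z \<in> Omega \<Longrightarrow> \<bar>\<Phi> z - \<Psi> z\<bar> \<le> D"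
  shows "\<bar>Lr \<Phi> x - Lr \<Psi> x\<bar> \<le> exp Fb / lam * D"
proof (cases "x \<in> Omega")
  case True
  have "\<bar>Lr \<Phi> x - Lr \<Psi> x\<bar> = \<bar>Ptr Z p f \<Phi> x - Ptr Z p f \<Psi> x\<bar> / lam"
    using True lam_pos by (simp add: Lr_def diff_divide_distrib[symmetric])
  also have "\<dots> \<le> exp Fb * D / lam" using P_diff[OF assms(1-4) True assms(5)] lam_pos
    by (simp add: divide_right_mono)
  finally show ?thesis by simp
next
  case False
  have "0 \<le> D" using assms(5)[OF x0_Omega] by linarith
  thus ?thesis using False lam_pos by (simp add: Lr_def)
qed

lemma Lr_cong: assumes "\<And>z. z \<in> Omega \<Longrightarrow> \<Phi> z = \<Psi> z" shows "Lr \<Phi> = Lr \<Psi>"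
proof
  fix x show "Lr \<Phi> x = Lr \<Psi> x"
  proof (cases "x \<in> Omega")
    case True thus ?thesis unfolding Lr_def using P_cong[OF True assms] by simp
  qed (simp add: Lr_def)
qed

lemma one_cone: "one \<in> cone 0"
  unfolding cone_def one_def by simp

lemma int_one: "integral\<^sup>L \<nu>0 one = 1"
proof -
  have "integral\<^sup>L \<nu>0 one = integral\<^sup>L \<nu>0 (\<lambda>_. 1::real)" by (rule int_cong) (simp add: one_def)
  also have "\<dots> = 1" using prob_space.prob_space[OF nu_prob] by simp
  finally show ?thesis .
qed

end


lemma zero_of_geom: fixes z C q :: real
  assumes "\<And>n. \<bar>z\<bar> \<le> C * q ^ n" "0 \<le> q" "q < 1" shows "z = 0"
proof -
  have "(\<lambda>n. C * q ^ n) \<longlonglongrightarrow> C * 0" by (intro tendsto_mult_left LIMSEQ_power_zero) (use assms in auto)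
  hence "\<bar>z\<bar> \<le> 0" by (intro LIMSEQ_le_const[of "\<lambda>n. C * q ^ n"]) (use assms(1) in auto)
  thus ?thesis by simp
qed

context rpf begin

definition A where "A = S * (\<eta> powr \<beta> / (1 - \<eta> powr \<beta>))"
definition a where "a = A + 1"
definition b where "b = A + r"

lemma A_nonneg: "0 \<le> A" unfolding A_def using S_nonneg r_pos r_lt1 by (simp add: r_def[symmetric])
lemma A_fix: "S * r + A * r = A"
  unfolding A_def r_def[symmetric] using r_lt1 by (simp add: field_simps)
lemma a_fix: "S * r + a * r = b" unfolding a_def b_def using A_fix by (simp add: algebra_simps)
lemma b_nonneg: "0 \<le> b" unfolding b_def using A_nonneg r_pos by simp
lemma b_lt_a: "b < a" unfolding a_def b_def using r_lt1 by simp
lemma a_pos: "0 < a" using b_nonneg b_lt_a by simp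
lemma A_le_a: "A \<le> a" unfolding a_def by simp

lemma cone_norm_upper: assumes "\<Phi> \<in> cone c" "0 \<le> c" "integral\<^sup>L \<nu>0 \<Phi> = 1" "x \<in> Omega"
  shows "\<Phi> x \<le> exp (c * T)"
proof -
  have "\<Phi> x / exp (c * T) \<le> integral\<^sup>L \<nu>0 \<Phi>"
    by (rule int_ge[OF cone_integrable[OF assms(1,2)]])
       (use cone_bound[OF assms(1,2,4)] in \<open>simp add: divide_le_eq mult.commute\<close>)
  thus ?thesis using assms(3) by (simp add: divide_le_eq)
qed

lemma cone_norm_lower: assumes "\<Phi> \<in> cone c" "0 \<le> c" "integral\<^sup>L \<nu>0 \<Phi> = 1" "x \<in> Omega"
  shows "exp (- c * T) \<le> \<Phi> x"
proof -
  have "integral\<^sup>L \<nu>0 \<Phi> \<le> exp (c * T) * \<Phi> x"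
    by (rule int_le[OF cone_integrable[OF assms(1,2)]]) (rule cone_bound[OF assms(1,2) _ assms(4)])
  hence "1 \<le> exp (c * T) * \<Phi> x" using assms(3) by simp
  hence "exp (- c * T) * 1 \<le> exp (- c * T) * (exp (c * T) * \<Phi> x)" by (intro mult_left_mono) auto
  also have "\<dots> = \<Phi> x" by (simp add: exp_minus field_simps)
  finally show ?thesis by simp
qed

definition Nset where "Nset = {\<Phi>. \<Phi> \<in> cone a \<and> integral\<^sup>L \<nu>0 \<Phi> = 1}"

definition m where "m = exp (- b * T)"
definition c0 where "c0 = (a - b) / (a * exp (a * T))"
definition eps where "eps = m * c0 / 2"
definition q where "q = 1 - eps"
definition K where "K = exp (a * T)"

lemma m_pos: "0 < m" and m_le1: "m \<le> 1"
  unfolding m_def using b_nonneg T_nonneg by auto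

lemma c0_pos: "0 < c0" and c0_le1: "c0 \<le> 1"
proof -
  show "0 < c0" unfolding c0_def using a_pos b_lt_a by simp
  have "a - b \<le> a * exp (a * T)" using a_pos b_nonneg T_nonneg
    by (smt (verit) mult_le_cancel_left1 one_le_exp_iff zero_le_mult_iff)
  thus "c0 \<le> 1" unfolding c0_def using a_pos by simp
qed

lemma eps: "0 < eps" "eps \<le> m * c0" "eps \<le> m" "eps < 1"
proof -
  show "0 < eps" "eps \<le> m * c0" unfolding eps_def using m_pos c0_pos by auto
  have "m * c0 \<le> 1 * 1" using m_pos m_le1 c0_pos c0_le1 by (intro mult_mono) auto
  thus "eps \<le> m" "eps < 1" unfolding eps_def using m_pos c0_le1 c0_pos
    by (auto simp: mult_le_cancel_left1)
qed

lemma q: "0 \<le> q" "q < 1" "0 < q" unfolding q_def using eps by auto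

lemma kri: assumes "0 \<le> t" "t \<le> T"
  shows "c0 * (exp (a * t) - 1) \<le> exp (a * t) - exp (b * t)"
proof -
  have "(a - b) * t \<le> exp ((a - b) * t) - 1"
    using exp_ge_add_one_self[of "(a - b) * t"] by linarith
  also have "\<dots> \<le> exp (b * t) * (exp ((a - b) * t) - 1)"
  proof -
    have e1: "1 \<le> exp (b * t)" using b_nonneg assms(1) by simp
    have e2: "0 \<le> exp ((a - b) * t) - 1" using b_lt_a assms(1) by simp
    show ?thesis using mult_right_mono[OF e1 e2] by simp
  qed
  also have "\<dots> = exp (a * t) - exp (b * t)" by (simp add: algebra_simps flip: exp_add)
  finally have 1: "(a - b) * t \<le> exp (a * t) - exp (b * t)" .
  have "exp (a * t) - 1 \<le> (a * t) * exp (a * t)" by (rule expm1_le) (use a_pos assms in simp)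
  also have "\<dots> \<le> (a * t) * exp (a * T)" using a_pos assms by (intro mult_left_mono) auto
  finally have 2: "exp (a * t) - 1 \<le> a * t * exp (a * T)" .
  have "c0 * (exp (a * t) - 1) \<le> c0 * (a * t * exp (a * T))" using c0_pos 2 by (intro mult_left_mono) auto
  also have "\<dots> = (a - b) * t" unfolding c0_def using a_pos by (simp add: field_simps)
  finally show ?thesis using 1 by simp
qed

end

context rpf begin

lemma Lr_iter_cone: assumes "\<Phi> \<in> cone c" "0 \<le> c" "S * r + c * r \<le> c"
  shows "(Lr ^^ n) \<Phi> \<in> cone c"
proof (induction n)
  case 0 thus ?case using assms(1) by simp
next
  case (Suc n)
  have "Lr ((Lr ^^ n) \<Phi>) \<in> cone (S * r + c * r)" by (rule Lr_cone[OF Suc assms(2)])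
  thus ?case using cone_mono[OF assms(3)] by auto
qed

lemma a_ok: "S * r + a * r \<le> a" using a_fix b_lt_a by simp
lemma A_ok: "S * r + A * r \<le> A" using A_fix by simp
lemma a_nonneg: "0 \<le> a" using a_pos by simp

lemma Lr_iter_int: assumes "\<Phi> \<in> cone c" "0 \<le> c" "S * r + c * r \<le> c"
  shows "integral\<^sup>L \<nu>0 ((Lr ^^ n) \<Phi>) = integral\<^sup>L \<nu>0 \<Phi>"
proof (induction n)
  case (Suc n)
  have "integral\<^sup>L \<nu>0 (Lr ((Lr ^^ n) \<Phi>)) = integral\<^sup>L \<nu>0 ((Lr ^^ n) \<Phi>)"
    by (rule Lr_int[OF Lr_iter_cone[OF assms] assms(2)])
  thus ?case using Suc by simp
qed simp

lemma Lr_iter_lin: assumes "\<Phi> \<in> cone a" "\<Psi> \<in> cone a"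
  shows "(Lr ^^ n) (\<lambda>z. \<alpha> * \<Phi> z + \<gamma> * \<Psi> z) = (\<lambda>z. \<alpha> * (Lr ^^ n) \<Phi> z + \<gamma> * (Lr ^^ n) \<Psi> z)"
proof (induction n)
  case (Suc n)
  have "(Lr ^^ Suc n) (\<lambda>z. \<alpha> * \<Phi> z + \<gamma> * \<Psi> z) = Lr (\<lambda>z. \<alpha> * (Lr ^^ n) \<Phi> z + \<gamma> * (Lr ^^ n) \<Psi> z)"
    using Suc by simp
  also have "\<dots> = (\<lambda>z. \<alpha> * Lr ((Lr ^^ n) \<Phi>) z + \<gamma> * Lr ((Lr ^^ n) \<Psi>) z)"
    by (rule Lr_lin[OF Lr_iter_cone[OF assms(1) a_nonneg a_ok] a_nonneg Lr_iter_cone[OF assms(2) a_nonneg a_ok] a_nonneg])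
  finally show ?case by simp
qed simp

lemma one_in: "one \<in> cone a" using one_cone cone_mono[OF a_nonneg] by auto

lemma one_int: "integrable \<nu>0 one" using cone_integrable[OF one_cone] by simp

lemma doeblin: assumes "\<Phi> \<in> Nset"
  obtains \<Phi>' where "\<Phi>' \<in> Nset" "Lr \<Phi> = (\<lambda>x. eps * one x + q * \<Phi>' x)"
proof -
  have Pc: "\<Phi> \<in> cone a" and Pi: "integral\<^sup>L \<nu>0 \<Phi> = 1" using assms unfolding Nset_def by auto
  define \<Psi> where "\<Psi> = Lr \<Phi>"
  have Psc: "\<Psi> \<in> cone b" unfolding \<Psi>_def using Lr_cone[OF Pc a_nonneg] a_fix by simp
  have Psi: "integral\<^sup>L \<nu>0 \<Psi> = 1" unfolding \<Psi>_def using Lr_int[OF Pc a_nonneg] Pi by simp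
  have Pslow: "m \<le> \<Psi> x" if "x \<in> Omega" for x
    unfolding m_def using cone_norm_lower[OF Psc b_nonneg Psi that] by simp
  define \<Phi>' where "\<Phi>' = (\<lambda>x. (\<Psi> x - eps * one x) / q)"
  have eq: "Lr \<Phi> = (\<lambda>x. eps * one x + q * \<Phi>' x)"
    unfolding \<Phi>'_def \<Psi>_def using q by (auto simp: fun_eq_iff)
  have c: "\<Phi>' \<in> cone a" unfolding cone_def
  proof (intro CollectI ballI conjI)
    fix x assume x: "x \<in> Omega"
    show "0 \<le> \<Phi>' x" unfolding \<Phi>'_def one_def using x Pslow[OF x] eps q by simp
  next
    fix x y assume x: "x \<in> Omega" and y: "y \<in> Omega"
    define t where "t = dd x y powr \<beta>"
    have t: "0 \<le> t" "t \<le> T" unfolding t_def using ddb_le_T[OF x y] by auto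
    have 1: "\<Psi> x \<le> exp (b * t) * \<Psi> y" unfolding t_def by (rule coneD[OF Psc x y])
    have ea: "0 \<le> exp (a * t) - 1" using a_pos t by simp
    have eab: "0 \<le> exp (a * t) - exp (b * t)" using b_lt_a t by (simp add: mult_right_mono)
    have "eps * (exp (a * t) - 1) \<le> (m * c0) * (exp (a * t) - 1)" by (rule mult_right_mono[OF eps(2) ea])
    also have "\<dots> = m * (c0 * (exp (a * t) - 1))" by simp
    also have "\<dots> \<le> m * (exp (a * t) - exp (b * t))" using kri[OF t] m_pos by (intro mult_left_mono) auto
    also have "\<dots> \<le> \<Psi> y * (exp (a * t) - exp (b * t))" by (rule mult_right_mono[OF Pslow[OF y] eab])
    finally have 2: "eps * (exp (a * t) - 1) \<le> \<Psi> y * (exp (a * t) - exp (b * t))" .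
    have "\<Psi> x - eps \<le> exp (a * t) * (\<Psi> y - eps)" using 1 2 by (simp add: algebra_simps)
    hence "(\<Psi> x - eps) / q \<le> exp (a * t) * ((\<Psi> y - eps) / q)" using q by (simp add: divide_right_mono)
    thus "\<Phi>' x \<le> exp (a * dd x y powr \<beta>) * \<Phi>' y" unfolding \<Phi>'_def one_def t_def using x y by simp
  qed
  have "integral\<^sup>L \<nu>0 \<Phi>' = (integral\<^sup>L \<nu>0 \<Psi> - eps * integral\<^sup>L \<nu>0 one) / q"
    unfolding \<Phi>'_def using cone_integrable[OF Psc b_nonneg] one_int by simp
  also have "\<dots> = 1" unfolding Psi int_one q_def using eps by simp
  finally have "\<Phi>' \<in> Nset" using c unfolding Nset_def by simp
  thus ?thesis using that eq by blast
qed

lemma N_bound: "\<Phi> \<in> Nset \<Longrightarrow> x \<in> Omega \<Longrightarrow> 0 \<le> \<Phi> x \<and> \<Phi> x \<le> K"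
proof -
  assume P: "\<Phi> \<in> Nset" and x: "x \<in> Omega"
  have c: "\<Phi> \<in> cone a" and i: "integral\<^sup>L \<nu>0 \<Phi> = 1" using P unfolding Nset_def by auto
  show ?thesis unfolding K_def using cone_nonneg[OF c x] cone_norm_upper[OF c a_nonneg i x] by simp
qed

lemma contraction: "\<Phi> \<in> Nset \<Longrightarrow> \<Psi> \<in> Nset \<Longrightarrow> x \<in> Omega \<Longrightarrow> \<bar>(Lr ^^ n) \<Phi> x - (Lr ^^ n) \<Psi> x\<bar> \<le> K * q ^ n"
proof (induction n arbitrary: \<Phi> \<Psi>)
  case 0
  have a: "0 \<le> \<Phi> x \<and> \<Phi> x \<le> K" by (rule N_bound[OF "0.prems"(1,3)])
  have b: "0 \<le> \<Psi> x \<and> \<Psi> x \<le> K" by (rule N_bound[OF "0.prems"(2,3)])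
  show ?case using a b by (simp add: abs_le_iff)
next
  case (Suc n)
  obtain \<Phi>' where P1: "\<Phi>' \<in> Nset" "Lr \<Phi> = (\<lambda>x. eps * one x + q * \<Phi>' x)" by (rule doeblin[OF Suc.prems(1)])
  obtain \<Psi>' where P2: "\<Psi>' \<in> Nset" "Lr \<Psi> = (\<lambda>x. eps * one x + q * \<Psi>' x)" by (rule doeblin[OF Suc.prems(2)])
  have c1: "\<Phi>' \<in> cone a" and c2: "\<Psi>' \<in> cone a" using P1(1) P2(1) unfolding Nset_def by auto
  have e1: "(Lr ^^ n) (Lr \<Phi>) = (\<lambda>z. eps * (Lr ^^ n) one z + q * (Lr ^^ n) \<Phi>' z)"
    unfolding P1(2) by (rule Lr_iter_lin[OF one_in c1])
  have e2: "(Lr ^^ n) (Lr \<Psi>) = (\<lambda>z. eps * (Lr ^^ n) one z + q * (Lr ^^ n) \<Psi>' z)"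
    unfolding P2(2) by (rule Lr_iter_lin[OF one_in c2])
  have s1: "(Lr ^^ Suc n) \<Phi> = (Lr ^^ n) (Lr \<Phi>)" "(Lr ^^ Suc n) \<Psi> = (Lr ^^ n) (Lr \<Psi>)"
    by (simp_all only: funpow_Suc_right o_def)
  have eq: "(Lr ^^ Suc n) \<Phi> x - (Lr ^^ Suc n) \<Psi> x = q * ((Lr ^^ n) \<Phi>' x - (Lr ^^ n) \<Psi>' x)"
    unfolding s1 e1 e2 by (simp add: right_diff_distrib)
  have "\<bar>(Lr ^^ Suc n) \<Phi> x - (Lr ^^ Suc n) \<Psi> x\<bar> = q * \<bar>(Lr ^^ n) \<Phi>' x - (Lr ^^ n) \<Psi>' x\<bar>" unfolding eq by (subst abs_mult, subst abs_of_pos[OF q(3)], rule refl)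
  also have "\<dots> \<le> q * (K * q ^ n)" by (rule mult_left_mono[OF Suc.IH[OF P1(1) P2(1) Suc.prems(3)] q(1)])
  finally show ?case by (simp add: algebra_simps)
qed

definition u where "u n = (Lr ^^ n) one"

lemma u_coneA: "u n \<in> cone A"
  unfolding u_def by (rule Lr_iter_cone[OF _ A_nonneg A_ok]) (use one_cone cone_mono[OF A_nonneg] in auto)

lemma u_int: "integral\<^sup>L \<nu>0 (u n) = 1"
  unfolding u_def using Lr_iter_int[OF one_cone order_refl] int_one S_nonneg r_pos
  by (simp add: Lr_iter_int[OF one_in a_nonneg a_ok])

lemma u_N: "u n \<in> Nset" unfolding Nset_def using u_coneA u_int cone_mono[OF A_le_a] by auto

lemma one_N: "one \<in> Nset" unfolding Nset_def using one_in int_one by auto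

lemma u_outside: "x \<notin> Omega \<Longrightarrow> u n x = 0"
  by (cases n) (auto simp: u_def one_def Lr_def)

lemma u_shift: "\<bar>u (j + n) x - u n x\<bar> \<le> K * q ^ n" if "x \<in> Omega"
proof -
  have "u (j + n) = (Lr ^^ n) (u j)" unfolding u_def by (simp add: funpow_add add.commute[of j])
  thus ?thesis using contraction[OF u_N one_N that, of n] unfolding u_def by simp
qed

definition h where "h x = lim (\<lambda>n. u n x)"

lemma u_tend: "(\<lambda>n. u n x) \<longlonglongrightarrow> h x"
proof (cases "x \<in> Omega")
  case True
  have "convergent (\<lambda>n. u n x)"
    by (rule conv_of_geom[OF _ q(1,2)]) (use u_shift[OF True, of 1] in simp)
  thus ?thesis unfolding h_def by (simp add: convergent_LIMSEQ_iff)
next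
  case False thus ?thesis unfolding h_def using u_outside by simp
qed

lemma h_outside: "x \<notin> Omega \<Longrightarrow> h x = 0"
  using u_tend[of x] u_outside by (simp add: LIMSEQ_const_iff)

lemma h_u: assumes "x \<in> Omega" shows "\<bar>h x - u n x\<bar> \<le> K * q ^ n"
proof -
  have "(\<lambda>j. u (j + n) x) \<longlonglongrightarrow> h x" using LIMSEQ_ignore_initial_segment[OF u_tend[of x], of n] by simp
  hence "(\<lambda>j. \<bar>u (j + n) x - u n x\<bar>) \<longlonglongrightarrow> \<bar>h x - u n x\<bar>" by (intro tendsto_rabs tendsto_diff) auto
  thus ?thesis by (rule LIMSEQ_le_const2) (use u_shift[OF assms] in auto)
qed

lemma h_coneA: "h \<in> cone A"
  unfolding cone_def
proof (intro CollectI ballI conjI)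
  fix x assume x: "x \<in> Omega"
  show "0 \<le> h x" by (rule LIMSEQ_le_const[OF u_tend]) (use cone_nonneg[OF u_coneA x] in auto)
next
  fix x y assume x: "x \<in> Omega" and y: "y \<in> Omega"
  show "h x \<le> exp (A * dd x y powr \<beta>) * h y"
    by (rule LIMSEQ_le[OF u_tend tendsto_mult_left[OF u_tend]]) (use coneD[OF u_coneA x y] in auto)
qed

lemma h_int: "integral\<^sup>L \<nu>0 h = 1"
proof -
  have hi: "integrable \<nu>0 h" by (rule cone_integrable[OF h_coneA A_nonneg])
  have "\<bar>integral\<^sup>L \<nu>0 h - 1\<bar> \<le> K * q ^ n" for n
  proof -
    have ui: "integrable \<nu>0 (u n)" by (rule cone_integrable[OF u_coneA A_nonneg])
    have e: "integral\<^sup>L \<nu>0 h - 1 = integral\<^sup>L \<nu>0 (\<lambda>x. h x - u n x)"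
      using hi ui u_int[of n] by simp
    have i2: "integrable \<nu>0 (\<lambda>x. h x - u n x)" using hi ui by simp
    have "integral\<^sup>L \<nu>0 (\<lambda>x. h x - u n x) \<le> K * q ^ n"
      by (rule int_le[OF i2]) (use h_u in \<open>auto simp: abs_le_iff\<close>)
    moreover have "- (K * q ^ n) \<le> integral\<^sup>L \<nu>0 (\<lambda>x. h x - u n x)"
    proof (rule int_ge[OF i2])
      fix x assume "x \<in> Omega"
      thus "- (K * q ^ n) \<le> h x - u n x" using abs_le_D2[OF h_u[of x n]] by simp
    qed
    ultimately show ?thesis unfolding e by (simp add: abs_le_iff)
  qed
  hence "integral\<^sup>L \<nu>0 h - 1 = 0" by (rule zero_of_geom[OF _ q(1,2)])
  thus ?thesis by simp
qed

lemma h_N: "h \<in> Nset" unfolding Nset_def using h_coneA h_int cone_mono[OF A_le_a] by auto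

lemma h_fix: "Lr h = h"
proof
  fix x show "Lr h x = h x"
  proof (cases "x \<in> Omega")
    case False thus ?thesis using h_outside by (simp add: Lr_def)
  next
    case True
    have "\<bar>Lr h x - h x\<bar> \<le> (exp Fb / lam * K + K * q) * q ^ n" for n
    proof -
      have e: "Lr (u n) = u (Suc n)" unfolding u_def by simp
      have 1: "\<bar>Lr h x - Lr (u n) x\<bar> \<le> exp Fb / lam * (K * q ^ n)"
        by (rule Lr_diff[OF h_coneA A_nonneg u_coneA A_nonneg]) (rule h_u)
      have 2: "\<bar>u (Suc n) x - h x\<bar> \<le> K * q ^ Suc n" using h_u[OF True, of "Suc n"] by simp
      have "\<bar>Lr h x - h x\<bar> \<le> exp Fb / lam * (K * q ^ n) + K * q ^ Suc n"
        using 1 2 unfolding e by (smt (verit))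
      thus ?thesis by (simp add: algebra_simps)
    qed
    hence "Lr h x - h x = 0" by (rule zero_of_geom[OF _ q(1,2)])
    thus ?thesis by simp
  qed
qed

lemma iter_fix: "Lr g = g \<Longrightarrow> (Lr ^^ n) g = g"
  by (induction n) auto

lemma h_pos: "x \<in> Omega \<Longrightarrow> 0 < h x"
  using cone_norm_lower[OF h_coneA A_nonneg h_int] by (meson exp_gt_zero less_le_trans)

lemma Delta_iff: "\<Phi> \<in> Delta_f dI \<theta> p \<beta> \<eta> f \<nu>0 \<longleftrightarrow>
   d_continuous dI \<theta> \<Phi> \<and> integral\<^sup>L \<nu>0 \<Phi> = 1 \<and> \<Phi> \<in> cone A"
  unfolding Delta_f_def cone_def Bfun_def A_def S_def[symmetric] dd_def by auto

lemma main:
  "\<exists>h\<in>Delta_f dI \<theta> p \<beta> \<eta> f \<nu>0.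
           (\<forall>x\<in>Omega. (\<lambda>k. Pk Z p f k h x) \<longlonglongrightarrow> lam * h x) \<and>
           (\<forall>g\<in>Delta_f dI \<theta> p \<beta> \<eta> f \<nu>0.
              (\<forall>x\<in>Omega. (\<lambda>k. Pk Z p f k g x) \<longlonglongrightarrow> lam * g x) \<longrightarrow> (\<forall>x\<in>Omega. g x = h x)) \<and>
           (\<forall>x\<in>Omega. 0 < h x)"
proof (intro bexI[of _ h] conjI ballI impI)
  show "h \<in> Delta_f dI \<theta> p \<beta> \<eta> f \<nu>0"
    unfolding Delta_iff using cone_cont[OF h_coneA A_nonneg] h_int h_coneA by simp
  fix x assume x: "x \<in> Omega"
  have "Ptr Z p f h x = lam * h x"
    using fun_cong[OF h_fix, of x] x lam_pos by (simp add: Lr_def field_simps)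
  thus "(\<lambda>k. Pk Z p f k h x) \<longlonglongrightarrow> lam * h x" using Pk_conv[OF h_coneA A_nonneg x] by simp
next
  fix x assume "x \<in> Omega" thus "0 < h x" by (rule h_pos)
next
  fix g x assume g: "g \<in> Delta_f dI \<theta> p \<beta> \<eta> f \<nu>0"
    and gt: "\<forall>x\<in>Omega. (\<lambda>k. Pk Z p f k g x) \<longlonglongrightarrow> lam * g x" and x: "x \<in> Omega"
  have gc: "g \<in> cone A" and gi: "integral\<^sup>L \<nu>0 g = 1" using g unfolding Delta_iff by auto
  define g0 where "g0 = (\<lambda>x. if x \<in> Omega then g x else 0)"
  have g0c: "g0 \<in> cone A" by (rule cone_cong[OF gc]) (simp add: g0_def)
  have g0i: "integral\<^sup>L \<nu>0 g0 = 1" using gi int_cong[of g0 g] by (simp add: g0_def)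
  have g0N: "g0 \<in> Nset" unfolding Nset_def using g0c g0i cone_mono[OF A_le_a] by auto
  have "Lr g0 = Lr g" by (rule Lr_cong) (simp add: g0_def)
  also have "Lr g = g0"
  proof
    fix y show "Lr g y = g0 y"
    proof (cases "y \<in> Omega")
      case True
      have "Ptr Z p f g y = lam * g y" unfolding Ptr_def using gt True by (simp add: limI)
      thus ?thesis using True lam_pos by (simp add: Lr_def g0_def)
    qed (simp add: Lr_def g0_def)
  qed
  finally have g0f: "Lr g0 = g0" .
  have "\<bar>g0 x - h x\<bar> \<le> K * q ^ n" for n
    using contraction[OF g0N h_N x, of n] iter_fix[OF g0f, of n] iter_fix[OF h_fix, of n] by simp
  hence "g0 x - h x = 0" by (rule zero_of_geom[OF _ q(1,2)])
  thus "g x = h x" using x by (simp add: g0_def)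
qed

end

theorem mainTheorem5:
  fixes dI :: "real \<Rightarrow> real \<Rightarrow> real"
    and \<theta> \<eta> \<beta> lam p :: real
    and \<tau> :: "real \<Rightarrow> real"
    and Z :: "(real \<Rightarrow> real) set"
    and f :: "(int \<Rightarrow> real) \<Rightarrow> real"
    and \<nu>0 :: "(int \<Rightarrow> real) measure"
  assumes metric: "is_metric_on Icar dI"
    and dI_bdd: "\<exists>M. \<forall>s\<in>Icar. \<forall>t\<in>Icar. dI s t \<le> M"
    and theta: "0 < \<theta>" "\<theta> < 1"
    and beta: "0 < \<beta>" "\<beta> \<le> 1"
    and eta: "0 < \<eta>" "\<eta> < 1"
    and tau_maps: "\<forall>s\<in>Icar. \<tau> s \<in> Icar"
    and Z_fin: "finite Z"
    and Z_inv: "\<forall>\<zeta>\<in>Z. \<forall>t\<in>Icar. \<zeta> t \<in> Icar \<and> \<tau> (\<zeta> t) = t"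
    and Z_full: "\<forall>t\<in>Icar. {s\<in>Icar. \<tau> s = t} = (\<lambda>\<zeta>. \<zeta> t) ` Z
                   \<and> card {s\<in>Icar. \<tau> s = t} = card Z"
    and Z_contr: "\<forall>\<zeta>\<in>Z. \<forall>s\<in>Icar. \<forall>t\<in>Icar. dI (\<zeta> s) (\<zeta> t) \<le> \<eta> * dI s t"
    and p_fix: "p \<in> Icar" "\<tau> p = p"
    and f_C: "in_C dI \<theta> p \<beta> f"
    and nu_prob: "prob_space \<nu>0"
    and nu_space: "space \<nu>0 = Omega"
    and nu_sets: "sets \<nu>0 = sigma_sets Omega {U. d_open dI \<theta> U}"
    and lambda_def: "lam = integral\<^sup>L \<nu>0 (Ptr Z p f (\<lambda>_. 1))"
    and nu_eigen: "\<forall>\<Phi>. in_C dI \<theta> p \<beta> \<Phi> \<longrightarrow>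
                     integrable \<nu>0 (Ptr Z p f \<Phi>) \<and>
                     integral\<^sup>L \<nu>0 (Ptr Z p f \<Phi>) = lam * integral\<^sup>L \<nu>0 \<Phi>"
  shows "\<exists>h\<in>Delta_f dI \<theta> p \<beta> \<eta> f \<nu>0.
           (\<forall>x\<in>Omega. (\<lambda>k. Pk Z p f k h x) \<longlonglongrightarrow> lam * h x) \<and>
           (\<forall>g\<in>Delta_f dI \<theta> p \<beta> \<eta> f \<nu>0.
              (\<forall>x\<in>Omega. (\<lambda>k. Pk Z p f k g x) \<longlonglongrightarrow> lam * g x) \<longrightarrow> (\<forall>x\<in>Omega. g x = h x)) \<and>
           (\<forall>x\<in>Omega. 0 < h x)"
proof -
  interpret R: rpf dI \<theta> \<eta> \<beta> lam p \<tau> Z f \<nu>0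
    using metric dI_bdd theta beta eta tau_maps Z_fin Z_inv Z_full Z_contr p_fix f_C nu_prob
      nu_space nu_sets lambda_def nu_eigen by (rule rpf.intro)
  show ?thesis by (rule R.main)
qed

end
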